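(* Let $\Gamma$ be a geometrically finite Fuchsian group such that $\infty\notin\widehat{\mathbb{R}}_{\mathrm{st}}$, so that the stabilizer $\Gamma_\infty$ of $\infty$ in $\Gamma$ is either trivial or generated by $t_\lambda=\begin{bmatrix}1&\lambda\\0&1\end{bmatrix}$ for some $\lambda>0$. Let $\mathrm{I},\mathrm{J}$ be isometric spheres of $\Gamma$ which are concentric (i.e. have the same Euclidean center). Then $\mathrm{I}=\mathrm{J}$.
   Context: A Fuchsian group is a discrete subgroup of $\mathrm{PSL}_2(\mathbb{R})$, acting on the upper half-plane $\mathbb{H}$ and on $\widehat{\mathbb{R}}=\mathbb{R}\cup\{\infty\}$ by linear fractional transformations. $\Lambda(\Gamma)$ denotes the limit set, and $\widehat{\mathbb{R}}_{\mathrm{st}}$ is $\Lambda(\Gamma)$ with all parabolic fixed points of $\Gamma$ removed. For $g=\begin{bmatrix}a&b\\c&d\end{bmatrix}\in\Gamma\setminus\Gamma_\infty$ (so $c\neq 0$) the isometric sphere of $g$ is $\mathrm{I}(g)=\{z\in\mathbb{H}: |g'(z)|=1\}=\{z\in\mathbb{H}: |z+\tfrac{d}{c}|=\tfrac{1}{|c|}\}$, a Euclidean semicircle with center $-d/c$ and radius $1/|c|$. The isometric spheres of $\Gamma$ are the sets $\mathrm{I}(g)$, $g\in\Gamma\setminus\Gamma_\infty$. *)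

theory Defs
  imports "HOL-Analysis.Analysis"
begin

text \<open>Elements of PSL(2,R) are represented by matrices in SL(2,R); a subgroup of
PSL(2,R) is represented by its preimage in SL(2,R), i.e. a subgroup of SL(2,R)
that is closed under negation.\<close>

type_synonym mat2 = "real^2^2"

definition SL2 :: "mat2 set" where
  "SL2 = {A. det A = 1}"

definition fuchsian :: "mat2 set \<Rightarrow> bool" where
  "fuchsian \<Gamma> \<longleftrightarrow>
     \<Gamma> \<subseteq> SL2 \<and> mat 1 \<in> \<Gamma> \<and>
     (\<forall>A\<in>\<Gamma>. \<forall>B\<in>\<Gamma>. A ** B \<in> \<Gamma>) \<and>
     (\<forall>A\<in>\<Gamma>. matrix_inv A \<in> \<Gamma>) \<and>
     (\<forall>A\<in>\<Gamma>. - A \<in> \<Gamma>) \<and>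
     (\<forall>A\<in>\<Gamma>. \<exists>e>0. \<forall>B\<in>\<Gamma>. dist B A < e \<longrightarrow> B = A)"

definition moeb :: "mat2 \<Rightarrow> complex \<Rightarrow> complex" where
  "moeb A z = (of_real (A$1$1) * z + of_real (A$1$2)) / (of_real (A$2$1) * z + of_real (A$2$2))"

definition upper_half_plane :: "complex set" where
  "upper_half_plane = {z. Im z > 0}"

text \<open>Extended real line: None is infinity, Some x is x.\<close>
definition act_ext :: "mat2 \<Rightarrow> real option \<Rightarrow> real option" where
  "act_ext A p = (case p of
      None \<Rightarrow> (if A$2$1 = 0 then None else Some (A$1$1 / A$2$1))
    | Some x \<Rightarrow> (if A$2$1 * x + A$2$2 = 0 then None
                 else Some ((A$1$1 * x + A$1$2) / (A$2$1 * x + A$2$2))))"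

definition orbit_i :: "mat2 set \<Rightarrow> complex set" where
  "orbit_i \<Gamma> = (\<lambda>g. moeb g \<i>) ` \<Gamma>"

text \<open>Limit set: accumulation points in \<open>\<real> \<union> {\<infinity>}\<close> of an orbit \<Gamma>i.\<close>
definition limit_set :: "mat2 set \<Rightarrow> real option set" where
  "limit_set \<Gamma> = {p. case p of
      None \<Rightarrow> \<not> bounded (orbit_i \<Gamma>)
    | Some x \<Rightarrow> complex_of_real x islimpt orbit_i \<Gamma>}"

definition parabolic :: "mat2 \<Rightarrow> bool" where
  "parabolic A \<longleftrightarrow> A \<in> SL2 \<and> \<bar>A$1$1 + A$2$2\<bar> = 2 \<and> A \<noteq> mat 1 \<and> A \<noteq> - mat 1"

definition parabolic_fixed_points :: "mat2 set \<Rightarrow> real option set" where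
  "parabolic_fixed_points \<Gamma> = {p. \<exists>A\<in>\<Gamma>. parabolic A \<and> act_ext A p = p}"

definition R_st :: "mat2 set \<Rightarrow> real option set" where
  "R_st \<Gamma> = limit_set \<Gamma> - parabolic_fixed_points \<Gamma>"

definition hyp_halfplane :: "complex set \<Rightarrow> bool" where
  "hyp_halfplane S \<longleftrightarrow>
     (\<exists>a. S = {z \<in> upper_half_plane. Re z \<le> a} \<or> S = {z \<in> upper_half_plane. Re z \<ge> a}) \<or>
     (\<exists>c r. r > 0 \<and> (S = {z \<in> upper_half_plane. cmod (z - complex_of_real c) \<le> r} \<or>
                     S = {z \<in> upper_half_plane. cmod (z - complex_of_real c) \<ge> r}))"

text \<open>Geometrically finite: there is a convex fundamental polygon with finitely many sides,
i.e. a finite intersection of closed hyperbolic half-planes whose \<Gamma>-translates cover the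
upper half-plane and whose interior is disjoint from its nontrivial translates.\<close>
definition geometrically_finite :: "mat2 set \<Rightarrow> bool" where
  "geometrically_finite \<Gamma> \<longleftrightarrow>
     (\<exists>P. finite P \<and> (\<forall>S\<in>P. hyp_halfplane S) \<and>
        (let F = upper_half_plane \<inter> \<Inter>P in
           interior F \<noteq> {} \<and>
           (\<Union>g\<in>\<Gamma>. moeb g ` F) = upper_half_plane \<and>
           (\<forall>g\<in>\<Gamma>. g \<noteq> mat 1 \<and> g \<noteq> - mat 1 \<longrightarrow> interior F \<inter> moeb g ` interior F = {})))"

definition isometric_sphere :: "mat2 \<Rightarrow> complex set" where
  "isometric_sphere g = {z \<in> upper_half_plane.
      cmod (z + complex_of_real (g$2$2 / g$2$1)) = 1 / \<bar>g$2$1\<bar>}"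

definition isom_center :: "mat2 \<Rightarrow> real" where
  "isom_center g = - g$2$2 / g$2$1"

definition isometric_spheres :: "mat2 set \<Rightarrow> complex set set" where
  "isometric_spheres \<Gamma> = {isometric_sphere g | g. g \<in> \<Gamma> \<and> g$2$1 \<noteq> 0}"

end

theory Submission
  imports Defs
begin

definition inv2 :: "mat2 \<Rightarrow> mat2" where
  "inv2 M = vector [vector [M$2$2, - M$1$2], vector [- M$2$1, M$1$1]]"

lemma inv2_simps [simp]:
  "inv2 M $1$1 = M$2$2" "inv2 M $1$2 = - M$1$2" "inv2 M $2$1 = - M$2$1" "inv2 M $2$2 = M$1$1"
  by (simp_all add: inv2_def)

lemma mm2: "((A::mat2) ** B)$i$j = A$i$1*B$1$j + A$i$2*B$2$j"
  by (simp add: matrix_matrix_mult_def sum_2)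

lemma mat2_eq: "(A::mat2) = B \<longleftrightarrow> A$1$1=B$1$1 \<and> A$1$2=B$1$2 \<and> A$2$1=B$2$1 \<and> A$2$2=B$2$2"
  by (auto simp: vec_eq_iff forall_2)

lemma mat1_simps [simp]: "(mat 1 :: mat2)$1$1 = 1" "(mat 1 :: mat2)$1$2 = 0"
  "(mat 1 :: mat2)$2$1 = 0" "(mat 1 :: mat2)$2$2 = 1"
  by (simp_all add: mat_def)

lemma det2: "det (A::mat2) = A$1$1*A$2$2 - A$1$2*A$2$1"
  by (simp add: det_2)

lemma matrix_inv_eq:
  assumes "(A::mat2) ** B = mat 1" "B ** A = mat 1"
  shows "matrix_inv A = B"
proof -
  let ?A' = "matrix_inv A"
  have "A ** ?A' = mat 1 \<and> ?A' ** A = mat 1"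
    unfolding matrix_inv_def by (rule someI[of _ B]) (use assms in auto)
  then have "?A' = ?A' ** (A ** B)" "?A' ** A = mat 1" using assms by auto
  then show ?thesis by (metis matrix_mul_assoc matrix_mul_lid matrix_mul_rid)
qed

lemma matrix_inv_inv2:
  assumes "det (A::mat2) = 1"
  shows "matrix_inv A = inv2 A"
  apply (rule matrix_inv_eq)
  using assms by (auto simp: mat2_eq mm2 det2 algebra_simps)

lemma norm_mat2: "norm (A::mat2) \<le> \<bar>A$1$1\<bar> + \<bar>A$1$2\<bar> + \<bar>A$2$1\<bar> + \<bar>A$2$2\<bar>"
proof -
  have "norm A \<le> (\<Sum>i\<in>UNIV. norm (A$i))"
    unfolding norm_vec_def by (rule L2_set_le_sum) auto
  also have "\<dots> = norm (A$1) + norm (A$2)" by (simp add: sum_2)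
  also have "\<dots> \<le> (\<bar>A$1$1\<bar> + \<bar>A$1$2\<bar>) + (\<bar>A$2$1\<bar> + \<bar>A$2$2\<bar>)"
    using norm_le_l1_cart[of "A$1"] norm_le_l1_cart[of "A$2"] by (simp add: sum_2)
  finally show ?thesis by simp
qed

lemma key:
  assumes F: "fuchsian \<Gamma>" and k: "k \<in> \<Gamma>" "k$2$1 = 0" "\<bar>k$1$1\<bar> > 1"
  shows "None \<in> R_st \<Gamma>"
proof -
  have sub: "\<Gamma> \<subseteq> SL2" and one: "mat 1 \<in> \<Gamma>"
    and mul: "\<And>A B. A \<in> \<Gamma> \<Longrightarrow> B \<in> \<Gamma> \<Longrightarrow> A ** B \<in> \<Gamma>"
    and inv: "\<And>A. A \<in> \<Gamma> \<Longrightarrow> matrix_inv A \<in> \<Gamma>"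
    and neg: "\<And>A. A \<in> \<Gamma> \<Longrightarrow> - A \<in> \<Gamma>"
    and disc: "\<And>A. A \<in> \<Gamma> \<Longrightarrow> \<exists>e>0. \<forall>B\<in>\<Gamma>. dist B A < e \<longrightarrow> B = A"
    using F unfolding fuchsian_def by blast+
  have detG: "\<And>A. A \<in> \<Gamma> \<Longrightarrow> det A = 1" using sub by (auto simp: SL2_def)
  define \<alpha> where "\<alpha> = k$1$1"
  define \<delta> where "\<delta> = k$2$2"
  have ad: "\<alpha> * \<delta> = 1" using detG[OF k(1)] k(2) by (simp add: det2 \<alpha>_def \<delta>_def)
  have a1: "\<bar>\<alpha>\<bar> > 1" using k(3) by (simp add: \<alpha>_def)
  have a2: "\<alpha>^2 > 1"
  proof -
    have "1 < \<bar>\<alpha>\<bar> * \<bar>\<alpha>\<bar>" using less_1_mult[OF a1 a1] .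
    also have "\<bar>\<alpha>\<bar> * \<bar>\<alpha>\<bar> = \<alpha>^2" by (simp add: power2_eq_square abs_mult[symmetric])
    finally show ?thesis .
  qed
  have d1: "\<delta>^2 < 1"
  proof -
    have "\<alpha>^2 * \<delta>^2 = 1" using ad by (simp add: power_mult_distrib[symmetric])
    moreover have "\<alpha>^2 \<noteq> 0" using a1 by auto
    ultimately have "\<delta>^2 = 1 / \<alpha>^2" by (metis nonzero_mult_div_cancel_left)
    then show ?thesis using a2 by (metis divide_less_eq_1_pos less_trans zero_less_one)
  qed
  define K where "K n = ((\<lambda>M. k ** M) ^^ n) (mat 1)" for n
  have Kprop: "K n \<in> \<Gamma> \<and> K n $2$1 = 0 \<and> K n $1$1 = \<alpha>^n" for n
  proof (induction n)
    case 0 then show ?case using one by (simp add: K_def)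
  next
    case (Suc n)
    have "K (Suc n) = k ** K n" by (simp add: K_def)
    then show ?case using Suc mul[OF k(1)] k(2) by (simp add: mm2 \<alpha>_def)
  qed
  have Im_K: "Im (moeb (K n) \<i>) = (\<alpha>^2)^n" for n
  proof -
    have d: "K n $1$1 * K n $2$2 = 1" using detG[of "K n"] Kprop[of n] by (simp add: det2)
    then have "K n $2$2 \<noteq> 0" by auto
    then have "Im (moeb (K n) \<i>) = K n $1$1 / K n $2$2"
      using Kprop[of n] by (simp add: moeb_def Im_divide power2_eq_square)
    also have "\<dots> = (K n $1$1)^2" using d \<open>K n $2$2 \<noteq> 0\<close>
      by (simp add: divide_simps power2_eq_square)
    finally show ?thesis using Kprop[of n] by (simp add: power_mult[symmetric] power_mult_distrib mult.commute)
  qed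
  have unb: "\<not> bounded (orbit_i \<Gamma>)"
  proof
    assume "bounded (orbit_i \<Gamma>)"
    then obtain M where M: "\<forall>x\<in>orbit_i \<Gamma>. norm x \<le> M" unfolding bounded_iff by blast
    obtain n where n: "M < (\<alpha>^2)^n" using real_arch_pow a2 by blast
    have "moeb (K n) \<i> \<in> orbit_i \<Gamma>" using Kprop[of n] by (auto simp: orbit_i_def)
    then have "norm (moeb (K n) \<i>) \<le> M" using M by blast
    moreover have "\<bar>Im (moeb (K n) \<i>)\<bar> \<le> norm (moeb (K n) \<i>)" by (rule abs_Im_le_cmod)
    ultimately show False using n Im_K[of n] by simp
  qed
  have notpar: "None \<notin> parabolic_fixed_points \<Gamma>"
  proof
    assume "None \<in> parabolic_fixed_points \<Gamma>"
    then obtain A where A: "A \<in> \<Gamma>" "parabolic A" "act_ext A None = None"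
      unfolding parabolic_fixed_points_def by blast
    have A21: "A$2$1 = 0" using A(3) by (auto simp: act_ext_def split: if_splits)
    have dA: "A$1$1 * A$2$2 = 1" using detG[OF A(1)] A21 by (simp add: det2)
    have tr: "\<bar>A$1$1 + A$2$2\<bar> = 2" using A(2) by (simp add: parabolic_def)
    define a where "a = A$1$1"
    have "(A$1$1 - A$2$2)^2 = (A$1$1 + A$2$2)^2 - 4 * (A$1$1 * A$2$2)" by (simp add: power2_eq_square algebra_simps)
    also have "\<dots> = 0"
    proof -
      have "(A$1$1 + A$2$2)^2 = \<bar>A$1$1 + A$2$2\<bar>^2" by simp
      then have "(A$1$1 + A$2$2)^2 = 4" using tr by simp
      then show ?thesis using dA by simp
    qed
    finally have A22: "A$2$2 = a" by (simp add: a_def)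
    have aa: "a * a = 1" using dA A22 a_def by simp
    then have apm: "a = 1 \<or> a = -1"
      using square_eq_1_iff[of a] by simp
    define t where "t = A$1$2"
    have t0: "t \<noteq> 0"
    proof
      assume "t = 0"
      then have "A = mat 1 \<or> A = - mat 1" using apm A21 A22 a_def t_def by (auto simp: mat2_eq)
      then show False using A(2) by (simp add: parabolic_def)
    qed
    define ki where "ki = matrix_inv k"
    have ki: "ki \<in> \<Gamma>" using inv[OF k(1)] ki_def by simp
    have kiE: "ki = inv2 k" using matrix_inv_inv2[OF detG[OF k(1)]] ki_def by simp
    define B where "B n = ((\<lambda>M. ki ** M ** k) ^^ n) A" for n
    have Bprop: "B n \<in> \<Gamma> \<and> B n $2$1 = 0 \<and> B n $1$1 = a \<and> B n $2$2 = a \<and> B n $1$2 = (\<delta>^2)^n * t" for n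
    proof (induction n)
      case 0 then show ?case using A(1) A21 A22 by (simp add: B_def a_def t_def)
    next
      case (Suc n)
      have e: "B (Suc n) = ki ** B n ** k" by (simp add: B_def)
      have "B (Suc n) \<in> \<Gamma>" using e Suc mul ki k(1) by metis
      moreover have "(ki ** B n ** k)$1$2 = \<delta>^2 * ((\<delta>^2)^n * t)"
        using Suc ad k(2) by (simp add: mm2 kiE \<alpha>_def[symmetric] \<delta>_def[symmetric] algebra_simps power2_eq_square)
      ultimately show ?case using Suc ad k(2)
        by (simp add: e mm2 kiE \<alpha>_def[symmetric] \<delta>_def[symmetric] algebra_simps)
    qed
    define P where "P = (if a = 1 then mat 1 else - mat 1 :: mat2)"
    have P: "P \<in> \<Gamma>" using one neg by (simp add: P_def)
    have Pe: "P$1$1 = a" "P$1$2 = 0" "P$2$1 = 0" "P$2$2 = a" using apm by (auto simp: P_def)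
    obtain e where e: "e > 0" "\<forall>B\<in>\<Gamma>. dist B P < e \<longrightarrow> B = P" using disc[OF P] by blast
    have "0 \<le> \<delta>^2" by simp
    obtain n where n: "(\<delta>^2)^n < e / \<bar>t\<bar>" using real_arch_pow_inv[of "e/\<bar>t\<bar>" "\<delta>^2"] d1 e t0 by auto
    have "dist (B n) P \<le> \<bar>(\<delta>^2)^n * t\<bar>"
      using norm_mat2[of "B n - P"] Bprop[of n] Pe by (simp add: dist_norm)
    also have "\<dots> = (\<delta>^2)^n * \<bar>t\<bar>" by (simp add: abs_mult)
    also have "\<dots> < e" using n t0 by (simp add: pos_less_divide_eq)
    finally have "B n = P" using e Bprop[of n] by blast
    moreover have "\<delta> \<noteq> 0" using ad by auto
    ultimately show False using Bprop[of n] Pe t0 by simp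
  qed
  show ?thesis using unb notpar by (simp add: R_st_def limit_set_def)
qed

lemma half:
  assumes F: "fuchsian \<Gamma>" and N: "None \<notin> R_st \<Gamma>"
    and g: "g \<in> \<Gamma>" "g$2$1 \<noteq> 0" and h: "h \<in> \<Gamma>" "h$2$1 \<noteq> 0"
    and c: "isom_center g = isom_center h"
  shows "\<not> \<bar>g$2$1\<bar> < \<bar>h$2$1\<bar>"
proof
  assume lt: "\<bar>g$2$1\<bar> < \<bar>h$2$1\<bar>"
  have sub: "\<Gamma> \<subseteq> SL2" and mul: "\<And>A B. A \<in> \<Gamma> \<Longrightarrow> B \<in> \<Gamma> \<Longrightarrow> A ** B \<in> \<Gamma>"
    and inv: "\<And>A. A \<in> \<Gamma> \<Longrightarrow> matrix_inv A \<in> \<Gamma>"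
    using F unfolding fuchsian_def by blast+
  have dg: "det g = 1" "det h = 1" using sub g h by (auto simp: SL2_def)
  define k where "k = g ** inv2 h"
  have kG: "k \<in> \<Gamma>" using mul[OF g(1) inv[OF h(1)]] matrix_inv_inv2[OF dg(2)] k_def by simp
  have cc: "g$2$2 * h$2$1 = h$2$2 * g$2$1"
    using c g(2) h(2) by (simp add: isom_center_def field_simps)
  have k21: "k$2$1 = 0" using cc by (simp add: k_def mm2 algebra_simps)
  have "g$2$1 * k$1$1 = h$2$1 * det g"
    by (simp add: k_def mm2 det2 algebra_simps) (metis cc mult.commute mult.left_commute)
  then have "g$2$1 * k$1$1 = h$2$1" using dg by simp
  then have "\<bar>g$2$1\<bar> * \<bar>k$1$1\<bar> = \<bar>h$2$1\<bar>" by (metis abs_mult)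
  then have "\<bar>k$1$1\<bar> > 1" using lt g(2)
  proof -
    have "\<bar>g$2$1\<bar> > 0" using g(2) by simp
    then show ?thesis using lt \<open>\<bar>g$2$1\<bar> * \<bar>k$1$1\<bar> = \<bar>h$2$1\<bar>\<close>
      by (metis mult.right_neutral mult_le_cancel_left_pos not_le)
  qed
  then show False using key[OF F kG k21] N by simp
qed

theorem lemma2p1:
  fixes \<Gamma> :: "mat2 set" and g h :: mat2
  assumes "fuchsian \<Gamma>"
    and "geometrically_finite \<Gamma>"
    and "None \<notin> R_st \<Gamma>"
    and "g \<in> \<Gamma>" and "g$2$1 \<noteq> 0"
    and "h \<in> \<Gamma>" and "h$2$1 \<noteq> 0"
    and "isom_center g = isom_center h"
  shows "isometric_sphere g = isometric_sphere h"
proof -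
  have "\<bar>g$2$1\<bar> = \<bar>h$2$1\<bar>"
    using half[OF assms(1,3,4,5,6,7,8)] half[OF assms(1,3,6,7,4,5) assms(8)[symmetric]] by linarith
  moreover have "g$2$2 / g$2$1 = h$2$2 / h$2$1" using assms(8) by (simp add: isom_center_def)
  ultimately show ?thesis by (simp add: isometric_sphere_def)
qed

end
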